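(* Let $\mathfrak{g}$ be a finite-dimensional real Lie algebra and, for a fixed sign $\pm$, let $\mathbf{M}_{\pm}\colon T^{*}\mathfrak{g} = \mathfrak{g}\times\mathfrak{g}^{*}\to\mathfrak{g}^{*}$ be $\mathbf{M}_{\pm}(q,p) = \mp\operatorname{ad}_{q}^{*}p$. If the center $\mathfrak{z}(\mathfrak{g}) = \{ z\in\mathfrak{g} : [z,x]=0 \ \forall x\in\mathfrak{g}\}$ is nontrivial, then $\mathbf{M}_{\pm}(T^{*}\mathfrak{g}) \subsetneq \mathfrak{g}^{*}$. Equivalently, a necessary condition for $\mathbf{M}_{\pm}(T^{*}\mathfrak{g}) = \mathfrak{g}^{*}$ is that $\mathfrak{z}(\mathfrak{g}) = \{0\}$.
   Context: $\operatorname{ad}_{x}^{*}\colon\mathfrak{g}^{*}\to\mathfrak{g}^{*}$ is the dual of $\operatorname{ad}_{x} = [x,\cdot\,]$, i.e. $\langle \operatorname{ad}_{x}^{*}\alpha, y\rangle = \langle \alpha, [x,y]\rangle$, with $\langle\cdot,\cdot\rangle$ the natural pairing of $\mathfrak{g}^{*}$ and $\mathfrak{g}$. *)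

theory Defs
  imports "HOL-Analysis.Analysis"
begin

definition lie_algebra :: "('a::euclidean_space \<Rightarrow> 'a \<Rightarrow> 'a) \<Rightarrow> bool" where
  "lie_algebra br \<longleftrightarrow> bilinear br \<and> (\<forall>x. br x x = 0) \<and>
     (\<forall>x y z. br x (br y z) + br y (br z x) + br z (br x y) = 0)"

definition dual_space :: "('a::euclidean_space \<Rightarrow> real) set" where
  "dual_space = {\<alpha>. linear \<alpha>}"

definition ad_star :: "('a \<Rightarrow> 'a \<Rightarrow> 'a) \<Rightarrow> 'a \<Rightarrow> ('a \<Rightarrow> real) \<Rightarrow> ('a \<Rightarrow> real)" where
  "ad_star br x \<alpha> = (\<lambda>y. \<alpha> (br x y))"

definition lie_center :: "('a \<Rightarrow> 'a \<Rightarrow> 'a::zero) \<Rightarrow> 'a set" where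
  "lie_center br = {z. \<forall>x. br z x = 0}"

text \<open>Momentum map M_\<pm>(q,p) = \<mp> ad*_q p; the sign \<pm> is encoded by s \<in> {1,-1},
  so M(q,p) = -s \<cdot> ad*_q p.\<close>
definition momentum_map :: "real \<Rightarrow> ('a \<Rightarrow> 'a \<Rightarrow> 'a) \<Rightarrow> 'a \<times> ('a \<Rightarrow> real) \<Rightarrow> ('a \<Rightarrow> real)" where
  "momentum_map s br qp = (\<lambda>y. - s * ad_star br (fst qp) (snd qp) y)"

end

theory Submission
  imports Defs
begin

lemma anticomm:
  assumes "lie_algebra br"
  shows "br y x = - br x y"
proof -
  have b: "bilinear br" and a: "\<And>x. br x x = 0" using assms unfolding lie_algebra_def by auto
  have "0 = br (x+y) (x+y)" using a by simp
  also have "\<dots> = br x x + br x y + br y x + br y y"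
    using bilinear_ladd[OF b] bilinear_radd[OF b] by (simp add: algebra_simps)
  finally show ?thesis using a by (simp add: eq_neg_iff_add_eq_0 add.commute)
qed

theorem proposition4p1:
  fixes br :: "'a::euclidean_space \<Rightarrow> 'a \<Rightarrow> 'a" and s :: real
  assumes "lie_algebra br"
    and "s = 1 \<or> s = -1"
    and "lie_center br \<noteq> {0}"
  shows "momentum_map s br ` (UNIV \<times> dual_space) \<subset> dual_space"
proof -
  have b: "bilinear br" using assms(1) unfolding lie_algebra_def by auto
  have "0 \<in> lie_center br" unfolding lie_center_def using bilinear_lzero[OF b] by simp
  then obtain z where z: "z \<in> lie_center br" "z \<noteq> 0" using assms(3) by blast
  have sub: "momentum_map s br ` (UNIV \<times> dual_space) \<subseteq> dual_space"
  proof
    fix f assume "f \<in> momentum_map s br ` (UNIV \<times> dual_space)"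
    then obtain q p where f: "f = momentum_map s br (q,p)" and p: "linear p"
      unfolding dual_space_def by auto
    have l1: "linear (br q)" using b unfolding bilinear_def by auto
    have "linear (\<lambda>y. p (br q y))" using linear_compose[OF l1 p] by (simp add: o_def)
    then have "linear (\<lambda>y. - s * p (br q y))" by (auto simp: linear_iff algebra_simps)
    then show "f \<in> dual_space" unfolding f dual_space_def momentum_map_def ad_star_def by simp
  qed
  let ?a = "\<lambda>y. y \<bullet> z"
  have la: "?a \<in> dual_space" unfolding dual_space_def by (auto simp: linear_iff inner_add_left)
  have "?a \<notin> momentum_map s br ` (UNIV \<times> dual_space)"
  proof
    assume "?a \<in> momentum_map s br ` (UNIV \<times> dual_space)"
    then obtain q p where f: "?a = momentum_map s br (q,p)" and p: "linear p"
      unfolding dual_space_def by auto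
    have "br q z = - br z q" using anticomm[OF assms(1)] by blast
    also have "br z q = 0" using z(1) unfolding lie_center_def by auto
    finally have "br q z = 0" by simp
    then have "?a z = 0" using f p linear_0[OF p] unfolding momentum_map_def ad_star_def
      by (metis fst_conv snd_conv mult_zero_right)
    then show False using z(2) by simp
  qed
  then show ?thesis using sub la by blast
qed

end
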